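(* Let $P=\bigcap_{j=1}^m\{\mathbf{u}\in\mathbb{R}^n:\langle\mathbf{u},\mathbf{v}_j\rangle-\lambda_j\ge0\}$ be an $n$-dimensional polytope in $\mathbb{R}^n$. If $\mathbf{u}\notin\mathrm{Trop}(P,\mathbf{m})$ for some lattice point $\mathbf{m}\in\mathbb{Z}^n$, then there exists a primitive lattice point $\widetilde{\mathbf{m}}\in\mathbb{Z}^n$ orthogonal to an $(n-1)$-dimensional subspace of $\mathbb{R}^n$ spanned by facet normal vectors $\mathbf{v}_j$ such that $\mathbf{u}\notin\mathrm{Trop}(P,\widetilde{\mathbf{m}})$.
   Context: The description of $P$ is non-redundant (each half-space bounds a distinct facet) and the inward normals $\mathbf{v}_j\in\mathbb{Z}^n$ are primitive; $\ell_j(\mathbf{u})=\langle\mathbf{u},\mathbf{v}_j\rangle-\lambda_j$. For $\mathbf{m}\in\mathbb{Z}^n$, $\mathrm{Trop}(P,\mathbf{m})$ is the non-differentiable locus of $\mathbf{u}\mapsto\min\{\ell_j(\mathbf{u}):\langle\mathbf{m},\mathbf{v}_j\rangle\neq0\}$, equivalently the set of $\mathbf{u}$ at which this minimum is attained by at least two distinct indices $j$ with $\langle\mathbf{m},\mathbf{v}_j\rangle\ne0$; $\mathrm{Trop}(P,\mathbf{0})=\mathbb{R}^n$. *)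

theory Defs
  imports "HOL-Analysis.Analysis"
begin

definition lattice_point :: "real^'n \<Rightarrow> bool" where
  "lattice_point x \<longleftrightarrow> (\<forall>i. x $ i \<in> \<int>)"

definition primitive :: "real^'n \<Rightarrow> bool" where
  "primitive x \<longleftrightarrow> lattice_point x \<and> x \<noteq> 0 \<and>
     (\<forall>w k. lattice_point w \<and> x = of_int k *\<^sub>R w \<longrightarrow> k = 1 \<or> k = -1)"

definition half_poly :: "nat \<Rightarrow> (nat \<Rightarrow> real^'n) \<Rightarrow> (nat \<Rightarrow> real) \<Rightarrow> (real^'n) set" where
  "half_poly N v lam = {u. \<forall>j<N. u \<bullet> v j - lam j \<ge> 0}"

definition Trop :: "nat \<Rightarrow> (nat \<Rightarrow> real^'n) \<Rightarrow> (nat \<Rightarrow> real) \<Rightarrow> real^'n \<Rightarrow> (real^'n) set" where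
  "Trop N v lam mm = (if mm = 0 then UNIV else
     {u. \<exists>j k. j < N \<and> k < N \<and> j \<noteq> k \<and> mm \<bullet> v j \<noteq> 0 \<and> mm \<bullet> v k \<noteq> 0 \<and>
          u \<bullet> v j - lam j = u \<bullet> v k - lam k \<and>
          (\<forall>i<N. mm \<bullet> v i \<noteq> 0 \<longrightarrow> u \<bullet> v j - lam j \<le> u \<bullet> v i - lam i)})"

end

theory Submission
  imports Defs
begin

lemma det_Ints:
  fixes A :: "real^'n^'n"
  assumes "\<And>i j. A$i$j \<in> \<int>"
  shows "det A \<in> \<int>"
  unfolding det_def
  apply (rule Ints_sum)
  apply (rule Ints_mult)
   apply simp
  apply (rule Ints_prod)
  using assms by blast


lemma exists_primitive:
  fixes w :: "real^'n"
  assumes lw: "lattice_point w" and w0: "w \<noteq> 0"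
  shows "\<exists>c>0. primitive (c *\<^sub>R w)"
proof -
  obtain i where wi: "w$i \<noteq> 0" using w0 by (auto simp: vec_eq_iff)
  define K where "K = {k::nat. 0 < k \<and> lattice_point ((1 / real k) *\<^sub>R w)}"
  have bnd: "real k \<le> \<bar>w$i\<bar>" if "k \<in> K" for k
  proof -
    have k0: "k > 0" and l: "lattice_point ((1 / real k) *\<^sub>R w)" using that K_def by auto
    have "((1 / real k) *\<^sub>R w)$i \<in> \<int>" using l unfolding lattice_point_def by blast
    hence "w$i / real k \<in> \<int>" by simp
    moreover have "w$i / real k \<noteq> 0" using wi k0 by simp
    ultimately have "\<bar>w$i / real k\<bar> \<ge> 1" by (rule Ints_nonzero_abs_ge1)
    thus ?thesis using k0 by (simp add: le_divide_eq)
  qed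
  have finK: "finite K"
  proof (rule finite_subset[of _ "{..nat \<lceil>\<bar>w$i\<bar>\<rceil>}"])
    show "K \<subseteq> {..nat \<lceil>\<bar>w$i\<bar>\<rceil>}"
    proof
      fix k assume "k \<in> K"
      hence "real k \<le> \<bar>w$i\<bar>" by (rule bnd)
      also have "\<bar>w$i\<bar> \<le> real (nat \<lceil>\<bar>w$i\<bar>\<rceil>)" by linarith
      finally show "k \<in> {..nat \<lceil>\<bar>w$i\<bar>\<rceil>}" by simp
    qed
  qed auto
  have "1 \<in> K" using lw K_def by simp
  define k0 where "k0 = Max K"
  have k0K: "k0 \<in> K" using finK \<open>1\<in>K\<close> k0_def Max_in by auto
  have k0max: "k \<le> k0" if "k \<in> K" for k using finK that k0_def by simp
  have k0pos: "k0 > 0" using k0K K_def by simp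
  define mt where "mt = (1 / real k0) *\<^sub>R w"
  have "primitive mt"
    unfolding primitive_def
  proof (intro conjI allI impI)
    show "lattice_point mt" using k0K K_def mt_def by simp
    show "mt \<noteq> 0" using mt_def w0 k0pos by simp
    fix w' k assume a: "lattice_point w' \<and> mt = of_int k *\<^sub>R w'"
    have "k \<noteq> 0" using a \<open>mt \<noteq> 0\<close> by auto
    define q where "q = k0 * nat \<bar>k\<bar>"
    have qpos: "q > 0" using \<open>k\<noteq>0\<close> k0pos q_def by simp
    have wq: "w = real k0 *\<^sub>R mt" using mt_def k0pos by simp
    have "(1 / real q) *\<^sub>R w = of_int (sgn k) *\<^sub>R w'"
    proof -
      have "(1 / real q) *\<^sub>R w = (real k0 / real q * of_int k) *\<^sub>R w'" using wq a by simp
      also have "real k0 / real q * of_int k = of_int (sgn k)"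
      proof -
        have "real q = real k0 * of_int \<bar>k\<bar>" unfolding q_def by simp
        hence "real k0 / real q * of_int k = of_int k / of_int \<bar>k\<bar>" using k0pos by simp
        also have "\<dots> = of_int (sgn k)" using \<open>k\<noteq>0\<close> by (cases "k > 0") auto
        finally show ?thesis .
      qed
      finally show ?thesis .
    qed
    moreover have "lattice_point (of_int (sgn k) *\<^sub>R w')"
      using a unfolding lattice_point_def by (simp add: Ints_mult)
    ultimately have "q \<in> K" using qpos K_def by simp
    hence "q \<le> k0" by (rule k0max)
    hence "nat \<bar>k\<bar> \<le> 1" using k0pos q_def by simp
    thus "k = 1 \<or> k = -1" using \<open>k\<noteq>0\<close> by linarith
  qed
  moreover have "1 / real k0 > 0" using k0pos by simp
  ultimately show ?thesis using mt_def by blast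
qed



lemma orth_span:
  fixes c :: "real^'n"
  assumes "\<forall>x\<in>A. c \<bullet> x = 0" and "y \<in> span A"
  shows "c \<bullet> y = 0"
  using assms(2)
proof (induction rule: span_induct_alt)
  case base then show ?case by simp
next
  case (step a x y) then show ?case using assms(1) by (simp add: inner_add_right)
qed

lemma span_normals:
  fixes v :: "nat \<Rightarrow> real^'n"
  assumes poly: "polytope (half_poly N v lam)"
    and full: "aff_dim (half_poly N v lam) = int CARD('n)"
  shows "span (v ` {..<N}) = UNIV"
proof (rule ccontr)
  assume ns: "span (v ` {..<N}) \<noteq> UNIV"
  have "dim (v ` {..<N}) \<noteq> DIM(real^'n)" using ns dim_eq_full[of "v ` {..<N}"] by simp
  hence "dim (v ` {..<N}) < DIM(real^'n)" using dim_subset_UNIV[of "v ` {..<N}"] by linarith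
  then obtain x :: "real^'n" where x0: "x \<noteq> 0" and xo: "\<And>y. y \<in> span (v ` {..<N}) \<Longrightarrow> orthogonal x y"
    using orthogonal_to_subspace_exists by blast
  have xv: "x \<bullet> v j = 0" if "j < N" for j
    using xo[of "v j"] that span_base orthogonal_def by (metis imageI lessThan_iff)
  have "half_poly N v lam \<noteq> {}"
    using full aff_dim_empty[of "half_poly N v lam"] by auto
  then obtain p where p: "p \<in> half_poly N v lam" by blast
  have inP: "p + t *\<^sub>R x \<in> half_poly N v lam" for t
    using p xv unfolding half_poly_def by (simp add: inner_add_left)
  have "bounded (half_poly N v lam)" using poly polytope_imp_compact compact_imp_bounded by blast
  then obtain b where b: "b > 0" "\<And>y. y \<in> half_poly N v lam \<Longrightarrow> norm y \<le> b"
    unfolding bounded_pos by blast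
  define t where "t = (b + norm p + 1) / norm x"
  have nx: "norm x > 0" using x0 by simp
  have "norm (t *\<^sub>R x) = b + norm p + 1" using nx b unfolding t_def by (simp add: abs_of_nonneg)
  moreover have "norm (t *\<^sub>R x) \<le> norm (p + t *\<^sub>R x) + norm p"
    by (metis add_diff_cancel_left' norm_triangle_ineq4 add.commute)
  moreover have "norm (p + t *\<^sub>R x) \<le> b" using b(2) inP by blast
  ultimately show False by linarith
qed



theorem lemma6p4:
  fixes N :: nat and v :: "nat \<Rightarrow> real^'n" and lam :: "nat \<Rightarrow> real"
    and mm :: "real^'n" and u :: "real^'n"
  assumes poly: "polytope (half_poly N v lam)"
    and full: "aff_dim (half_poly N v lam) = int CARD('n)"
    and prim: "\<forall>j<N. primitive (v j)"
    and facets: "\<forall>j<N. {x \<in> half_poly N v lam. x \<bullet> v j - lam j = 0} facet_of half_poly N v lam"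
    and nonred: "inj_on (\<lambda>j. {x \<in> half_poly N v lam. x \<bullet> v j - lam j = 0}) {..<N}"
    and mlat: "lattice_point mm"
    and notin: "u \<notin> Trop N v lam mm"
  shows "\<exists>mt J. primitive mt \<and> J \<subseteq> {..<N} \<and> dim (span (v ` J)) = CARD('n) - 1 \<and>
           (\<forall>x\<in>span (v ` J). orthogonal mt x) \<and> u \<notin> Trop N v lam mt"
proof -
  define l where "l j = u \<bullet> v j - lam j" for j
  define V where "V = v ` {..<N}"
  have spanV: "span V = UNIV" using span_normals[OF poly full] V_def by simp
  have mm0: "mm \<noteq> 0" using notin unfolding Trop_def by auto
  have notin': "\<not> (\<exists>j k. j < N \<and> k < N \<and> j \<noteq> k \<and> mm \<bullet> v j \<noteq> 0 \<and> mm \<bullet> v k \<noteq> 0 \<and>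
          l j = l k \<and> (\<forall>i<N. mm \<bullet> v i \<noteq> 0 \<longrightarrow> l j \<le> l i))"
    using notin mm0 unfolding Trop_def l_def by auto
  define S where "S = {j. j < N \<and> mm \<bullet> v j \<noteq> 0}"
  have finS: "finite S" unfolding S_def by simp
  have Sne: "S \<noteq> {}"
  proof
    assume "S = {}"
    hence "\<forall>x\<in>V. mm \<bullet> x = 0" unfolding S_def V_def by auto
    hence "mm \<bullet> mm = 0" using orth_span[of V mm mm] spanV by simp
    thus False using mm0 by simp
  qed
  obtain j0 where j0S: "j0 \<in> S" and j0min: "\<And>j. j \<in> S \<Longrightarrow> l j0 \<le> l j"
  proof -
    have "Min (l ` S) \<in> l ` S" using finS Sne by simp
    then obtain j0 where "j0 \<in> S" "l j0 = Min (l ` S)" by auto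
    moreover have "\<And>j. j \<in> S \<Longrightarrow> Min (l ` S) \<le> l j" using finS by simp
    ultimately show ?thesis using that by metis
  qed
  have j0N: "j0 < N" and mj0: "mm \<bullet> v j0 \<noteq> 0" using j0S S_def by auto
  define T where "T = {j. j < N \<and> j \<noteq> j0 \<and> l j \<le> l j0}"
  have hT: "mm \<bullet> v j = 0" if "j \<in> T" for j
  proof (rule ccontr)
    assume a: "mm \<bullet> v j \<noteq> 0"
    have jN: "j < N" "j \<noteq> j0" "l j \<le> l j0" using that T_def by auto
    hence "j \<in> S" using a S_def by simp
    hence "l j0 = l j" using j0min jN by force
    moreover have "\<forall>i<N. mm \<bullet> v i \<noteq> 0 \<longrightarrow> l j0 \<le> l i" using j0min S_def by simp
    ultimately show False using notin' j0N jN a mj0 by metis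
  qed
  define A where "A = v ` T"
  have A_orth: "\<forall>x\<in>A. mm \<bullet> x = 0" using hT A_def by auto
  have vj0A: "v j0 \<notin> span A" using orth_span[OF A_orth] mj0 by blast
  obtain BT where BT: "BT \<subseteq> A" "independent BT" "A \<subseteq> span BT"
    using maximal_independent_subset by blast
  have "span BT \<subseteq> span A" using BT(1) span_mono by blast
  hence vj0BT: "v j0 \<notin> span BT" using vj0A by blast
  have AV: "A \<subseteq> V" unfolding A_def V_def T_def by auto
  have S0V: "insert (v j0) BT \<subseteq> V" using BT(1) AV j0N V_def by auto
  have S0i: "independent (insert (v j0) BT)" using independent_insertI[OF vj0BT BT(2)] .
  obtain B where B: "insert (v j0) BT \<subseteq> B" "B \<subseteq> V" "independent B" "V \<subseteq> span B"
    using maximal_independent_subset_extend[OF S0V S0i] by blast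
  have spanB: "span B = UNIV" using B(4) spanV span_mono[OF B(4)] by (auto simp: span_span)
  have finB: "finite B" using independent_bound B(3) by blast
  have cardB: "card B = CARD('n)"
    using basis_card_eq_dim[of B UNIV] B(3) spanB by simp
  define B' where "B' = B - {v j0}"
  define J where "J = {j. j < N \<and> v j \<in> B'}"
  have vJ: "v ` J = B'" using B(2) unfolding J_def B'_def V_def by auto
  have JN: "J \<subseteq> {..<N}" unfolding J_def by auto
  have indB': "independent B'" using B(3) B'_def by (metis Diff_subset dependent_mono)
  have dimJ: "dim (span (v ` J)) = CARD('n) - 1"
    using vJ dim_span dim_eq_card_independent[OF indB'] cardB B(1) finB B'_def by simp
  have BTB': "BT \<subseteq> B'" using B(1) vj0BT span_base B'_def by blast
  have AB': "A \<subseteq> span B'" using BT(3) span_mono[OF BTB'] by blast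
  have vj0B': "v j0 \<notin> span B'"
  proof -
    have "B = insert (v j0) B'" using B(1) B'_def by auto
    hence "independent (insert (v j0) B')" using B(3) by simp
    moreover have "v j0 \<notin> B'" using B'_def by simp
    ultimately show ?thesis using independent_insert by metis
  qed
  have "finite (UNIV :: 'n set)" by simp
  moreover have "card (UNIV :: 'n set) = card B" using cardB by simp
  ultimately obtain h :: "'n \<Rightarrow> real^'n" where h: "bij_betw h UNIV B"
    using finite_same_card_bij[OF _ finB] by blast
  obtain i0 where hi0: "h i0 = v j0" using h B(1) unfolding bij_betw_def by auto
  define M :: "real^'n^'n" where "M = (\<chi> r. h r)"
  have Mv: "(M *v x) $ r = h r \<bullet> x" for x r
    unfolding M_def by (simp add: matrix_vector_mult_def inner_vec_def)
  have injM: "inj (\<lambda>x. M *v x)"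
  proof -
    have "x = 0" if "M *v x = 0" for x
    proof -
      have "\<forall>y\<in>B. x \<bullet> y = 0"
      proof
        fix y assume "y \<in> B"
        then obtain r where "y = h r" using h unfolding bij_betw_def by auto
        thus "x \<bullet> y = 0" using Mv[of x r] that by (simp add: inner_commute)
      qed
      hence "x \<bullet> x = 0" using orth_span[of B x x] spanB by simp
      thus ?thesis by simp
    qed
    thus ?thesis using linear_inj_iff_eq_0[OF matrix_vector_mul_linear] by blast
  qed
  have detM: "det M \<noteq> 0"
    using det_nz_iff_inj[OF matrix_vector_mul_linear[of M]] injM by simp
  define bb :: "real^'n" where "bb = axis i0 1"
  define w' :: "real^'n" where "w' = (\<chi> k. det(\<chi> i j. if j=k then bb$i else M$i$j))"
  have "M *v ((1 / det M) *\<^sub>R w') = bb"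
    using cramer[OF detM, of "(1 / det M) *\<^sub>R w'" bb] unfolding w'_def
    by (simp add: vec_eq_iff divide_inverse mult.commute)
  hence "M *v w' = det M *\<^sub>R bb" using detM
    by (metis matrix_vector_mult_scaleR scaleR_one nonzero_eq_divide_eq divide_inverse mult.commute
        scaleR_scaleR right_inverse inverse_eq_divide)
  hence hw': "h r \<bullet> w' = (if r = i0 then det M else 0)" for r
    using Mv[of w' r] unfolding bb_def by (cases "r = i0") (auto simp: axis_def)
  have latV: "lattice_point x" if "x \<in> V" for x
    using that prim V_def primitive_def by auto
  have lw': "lattice_point w'"
    unfolding lattice_point_def w'_def
  proof
    fix k
    have ints: "(\<chi> i j. if j=k then bb$i else M$i$j) $ i $ j \<in> \<int>" for i j
    proof (cases "j = k")
      case True thus ?thesis by (simp add: bb_def axis_def)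
    next
      case False
      have "h i \<in> V" using h B(2) unfolding bij_betw_def by auto
      hence "(h i) $ j \<in> \<int>" using latV lattice_point_def by blast
      thus ?thesis using False M_def by simp
    qed
    thus "(\<chi> k. det(\<chi> i j. if j=k then bb$i else M$i$j)) $ k \<in> \<int>"
      using det_Ints[OF ints] by simp
  qed
  have w'0: "w' \<noteq> 0" using hw'[of i0] detM by auto
  obtain c where c: "c > 0" "primitive (c *\<^sub>R w')"
    using exists_primitive[OF lw' w'0] by blast
  define mt where "mt = c *\<^sub>R w'"
  have mtB': "mt \<bullet> y = 0" if yB: "y \<in> B'" for y
  proof -
    obtain r where r: "y = h r" using yB h B'_def unfolding bij_betw_def by auto
    have "r \<noteq> i0" using r yB hi0 B'_def by auto
    thus ?thesis using hw'[of r] r mt_def by (simp add: inner_commute)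
  qed
  have mt_span: "mt \<bullet> y = 0" if "y \<in> span B'" for y
    using orth_span[of B' mt y] mtB' that by blast
  have mtj0: "mt \<bullet> v j0 \<noteq> 0" using hw'[of i0] hi0 detM c(1) mt_def by (simp add: inner_commute)
  have mtT: "mt \<bullet> v j = 0" if "j \<in> T" for j
  proof -
    have "v j \<in> A" using that A_def by blast
    thus ?thesis using mt_span AB' by blast
  qed
  have "u \<notin> Trop N v lam mt"
  proof
    assume "u \<in> Trop N v lam mt"
    moreover have "mt \<noteq> 0" using c(2)[folded mt_def] unfolding primitive_def by blast
    ultimately obtain j k where jk: "j < N" "k < N" "j \<noteq> k" "mt \<bullet> v j \<noteq> 0" "mt \<bullet> v k \<noteq> 0"
        "l j = l k" "\<forall>i<N. mt \<bullet> v i \<noteq> 0 \<longrightarrow> l j \<le> l i"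
      unfolding Trop_def l_def by auto
    have "l j \<le> l j0" using jk(7) j0N mtj0 by blast
    hence "j = j0" using jk(1,4) mtT T_def by blast
    hence "k \<in> T" using jk T_def by auto
    thus False using mtT jk(5) by blast
  qed
  moreover have "\<forall>x\<in>span (v ` J). orthogonal mt x"
    using mt_span vJ orthogonal_def by auto
  ultimately show ?thesis using c(2)[folded mt_def] JN dimJ by blast
qed

end
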